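(* Let $A$ be a meet-complemented lattice in which $\Box x$ and $\Diamond x$ exist for every $x\in A$. Then the following are equivalent: (i) $\Diamond\Box a\le\Box a$ for all $a\in A$; (ii) $\Diamond a\le\Box\Diamond a$ for all $a\in A$.
   Context: A meet-complemented lattice is a lattice $(L,\le)$ (not necessarily distributive) such that for every $a\in L$ the element $\neg a=\max\{b\in L: a\wedge b\le c\ \text{for all } c\in L\}$ exists; it is bounded with bottom $0$ and top $1$. For $a\in L$, $\Box a=\max\{b\in L: a\vee\neg b=1\}$ and $\Diamond a=\min\{b\in L: \neg a\vee b=1\}$. *)

theory Defs
  imports Main
begin

definition is_max_of :: "('a::order \<Rightarrow> bool) \<Rightarrow> 'a \<Rightarrow> bool" where
  "is_max_of P x \<longleftrightarrow> P x \<and> (\<forall>y. P y \<longrightarrow> y \<le> x)"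

definition is_min_of :: "('a::order \<Rightarrow> bool) \<Rightarrow> 'a \<Rightarrow> bool" where
  "is_min_of P x \<longleftrightarrow> P x \<and> (\<forall>y. P y \<longrightarrow> x \<le> y)"

definition meet_complemented :: "'a::bounded_lattice itself \<Rightarrow> bool" where
  "meet_complemented _ \<longleftrightarrow> (\<forall>a::'a. \<exists>b. is_max_of (\<lambda>b. \<forall>c. inf a b \<le> c) b)"

definition mneg :: "'a::bounded_lattice \<Rightarrow> 'a" where
  "mneg a = (GREATEST b. \<forall>c. inf a b \<le> c)"

definition mbox :: "'a::bounded_lattice \<Rightarrow> 'a" where
  "mbox a = (GREATEST b. sup a (mneg b) = top)"

definition mdia :: "'a::bounded_lattice \<Rightarrow> 'a" where
  "mdia a = (LEAST b. sup (mneg a) b = top)"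

definition box_exists :: "'a::bounded_lattice \<Rightarrow> bool" where
  "box_exists a \<longleftrightarrow> (\<exists>b. is_max_of (\<lambda>b. sup a (mneg b) = top) b)"

definition dia_exists :: "'a::bounded_lattice \<Rightarrow> bool" where
  "dia_exists a \<longleftrightarrow> (\<exists>b. is_min_of (\<lambda>b. sup (mneg a) b = top) b)"

end

theory Submission
  imports Defs
begin

lemma mneg_prop:
  assumes "meet_complemented TYPE('a::bounded_lattice)"
  shows "inf (a::'a) (mneg a) = bot" and "inf a b = bot \<Longrightarrow> b \<le> mneg a"
proof -
  from assms obtain m where m: "is_max_of (\<lambda>b. \<forall>c. inf a b \<le> c) m"
    unfolding meet_complemented_def by blast
  have eq: "mneg a = m" unfolding mneg_def
    by (rule Greatest_equality) (use m in \<open>auto simp: is_max_of_def\<close>)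
  show "inf (a::'a) (mneg a) = bot" using m eq unfolding is_max_of_def
    by (metis bot_unique)
  show "inf a b = bot \<Longrightarrow> b \<le> mneg a" using m eq unfolding is_max_of_def by (metis bot_least)
qed

lemma mneg_anti:
  assumes "meet_complemented TYPE('a::bounded_lattice)" "(b::'a) \<le> b'"
  shows "mneg b' \<le> mneg b"
proof -
  have "inf b (mneg b') \<le> inf b' (mneg b')" using assms(2) by (meson inf_mono order_refl)
  then have "inf b (mneg b') = bot" using mneg_prop(1)[OF assms(1), of b'] by (simp add: bot_unique)
  thus ?thesis using mneg_prop(2)[OF assms(1)] by blast
qed

lemma box_char:
  assumes "meet_complemented TYPE('a::bounded_lattice)" "box_exists (a::'a)"
  shows "b \<le> mbox a \<longleftrightarrow> sup a (mneg b) = top"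
proof -
  from assms(2) obtain m where m: "is_max_of (\<lambda>b. sup a (mneg b) = top) m"
    unfolding box_exists_def by blast
  have eq: "mbox a = m" unfolding mbox_def
    by (rule Greatest_equality) (use m in \<open>auto simp: is_max_of_def\<close>)
  show ?thesis
  proof
    assume "b \<le> mbox a"
    hence "mneg m \<le> mneg b" using mneg_anti[OF assms(1)] eq by blast
    hence "sup a (mneg m) \<le> sup a (mneg b)" by (meson sup_mono order_refl)
    thus "sup a (mneg b) = top" using m unfolding is_max_of_def by (simp add: top_unique)
  next
    assume "sup a (mneg b) = top" thus "b \<le> mbox a" using m eq unfolding is_max_of_def by simp
  qed
qed

lemma dia_char:
  assumes "meet_complemented TYPE('a::bounded_lattice)" "dia_exists (a::'a)"
  shows "mdia a \<le> b \<longleftrightarrow> sup (mneg a) b = top"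
proof -
  from assms(2) obtain m where m: "is_min_of (\<lambda>b. sup (mneg a) b = top) m"
    unfolding dia_exists_def by blast
  have eq: "mdia a = m" unfolding mdia_def
    by (rule Least_equality) (use m in \<open>auto simp: is_min_of_def\<close>)
  show ?thesis
  proof
    assume "mdia a \<le> b"
    hence "sup (mneg a) m \<le> sup (mneg a) b" using eq by (meson sup_mono order_refl)
    thus "sup (mneg a) b = top" using m unfolding is_min_of_def by (simp add: top_unique)
  next
    assume "sup (mneg a) b = top" thus "mdia a \<le> b" using m eq unfolding is_min_of_def by simp
  qed
qed

theorem proposition19:
  assumes "meet_complemented TYPE('a::bounded_lattice)"
    and "\<forall>x::'a. box_exists x"
    and "\<forall>x::'a. dia_exists x"
  shows "(\<forall>a::'a. mdia (mbox a) \<le> mbox a) \<longleftrightarrow> (\<forall>a::'a. mdia a \<le> mbox (mdia a))"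
proof -
  have gc: "mdia b \<le> a \<longleftrightarrow> b \<le> mbox a" for a b :: 'a
    using dia_char[OF assms(1)] box_char[OF assms(1)] assms(2,3) by (simp add: sup_commute)
  have unit: "b \<le> mbox (mdia b)" for b :: 'a using gc by blast
  have counit: "mdia (mbox b) \<le> b" for b :: 'a using gc by blast
  have dmono: "x \<le> y \<Longrightarrow> mdia x \<le> mdia y" for x y :: 'a
    using gc unit order_trans by metis
  have bmono: "x \<le> y \<Longrightarrow> mbox x \<le> mbox y" for x y :: 'a
    using gc counit order_trans by metis
  show ?thesis
  proof
    assume H: "\<forall>a::'a. mdia (mbox a) \<le> mbox a"
    show "\<forall>a::'a. mdia a \<le> mbox (mdia a)"
    proof
      fix a :: 'a
      show "mdia a \<le> mbox (mdia a)"
      proof -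
        have "a \<le> mbox (mdia a)" by (rule unit)
        hence "mdia a \<le> mdia (mbox (mdia a))" by (rule dmono)
        also have "\<dots> \<le> mbox (mdia a)" using H by blast
        finally show ?thesis .
      qed
    qed
  next
    assume H: "\<forall>a::'a. mdia a \<le> mbox (mdia a)"
    show "\<forall>a::'a. mdia (mbox a) \<le> mbox a"
    proof
      fix a :: 'a
      have "mdia (mbox a) \<le> mbox (mdia (mbox a))" using H by blast
      also have "\<dots> \<le> mbox a" using bmono counit by blast
      finally show "mdia (mbox a) \<le> mbox a" .
    qed
  qed
qed

end
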